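(* There exist an environment $E$ and a total preorder $\succeq$ on $\Pi^E$ such that $\succeq\in\mathrm{Ord}_{\mathrm{LTL}}(E)$ but $\succeq\notin\mathrm{Ord}_{\mathrm{ONMR}}(E)$.
   Context: An environment is a tuple $E=(\mathcal S,\mathcal A,\mathcal T,\mathcal I)$ where $\mathcal S,\mathcal A$ are finite nonempty sets, $\mathcal T:\mathcal S\times\mathcal A\to\Delta(\mathcal S)$ and $\mathcal I\in\Delta(\mathcal S)$. A policy is a map $\pi:\mathcal S\to\Delta(\mathcal A)$ (stationary, possibly stochastic); $\Pi^E$ denotes the set of all policies. A trajectory $\xi=(s_0,a_0,s_1,a_1,\dots)\in\Xi:=\mathcal S\times(\mathcal A\times\mathcal S)^\omega$ is generated under $\pi$ by $s_0\sim\mathcal I$, $a_t\sim\pi(s_t)$, $s_{t+1}\sim\mathcal T(s_t,a_t)$; $\mathbb E^\pi_\xi$ denotes expectation under this distribution. An objective-specification formalism $X$ assigns to each environment $E$ a set of objective specifications, each inducing a total preorder $\succeq$ on $\Pi^E$; $\mathrm{Ord}_X(E)$ is the set of total preorders so induced. A specification defining a scalar $J:\Pi^E\to\mathbb R$ induces $\pi_1\succeq\pi_2\iff J(\pi_1)\ge J(\pi_2)$. ONMR: specification $(\mathcal R,f,\gamma)$ with $\mathcal R:\mathcal S\times\mathcal A\times\mathcal S\to\mathbb R$, $f:\mathbb R\to\mathbb R$, $\gamma\in[0,1)$; $J(\pi)=f\big(\mathbb E^\pi_\xi[\sum_{t=0}^\infty\gamma^t\mathcal R(s_t,a_t,s_{t+1})]\big)$.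 LTL: specification $(\varphi)$ with $\varphi$ a linear temporal logic formula whose atomic propositions are the transitions $(s,a,s')\in\mathcal S\times\mathcal A\times\mathcal S$, built with $\neg,\lor,\land,\to$ and the temporal operators $\bigcirc$ (next), $\square$ (always), $\lozenge$ (eventually), $\mathcal U$ (until). Semantics on a trajectory $\xi$ at time $t$: an atomic proposition $(s,a,s')$ holds iff $(s_t,a_t,s_{t+1})=(s,a,s')$; $\bigcirc\psi$ holds iff $\psi$ holds at $t+1$; $\square\psi$ iff $\psi$ holds at every $t'\ge t$; $\lozenge\psi$ iff $\psi$ holds at some $t'\ge t$; $\psi\,\mathcal U\,\chi$ iff there is $t'\ge t$ with $\chi$ holding at $t'$ and $\psi$ holding at every $t''$ with $t\le t''<t'$; Boolean connectives as usual. $\varphi(\xi)=1$ if $\varphi$ holds at time $0$ and $0$ otherwise; $J(\pi)=\mathbb E^\pi_\xi[\varphi(\xi)]$. *)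

theory Defs
  imports "HOL-Probability.Probability"
begin

definition is_env :: "nat set \<Rightarrow> nat set \<Rightarrow> (nat \<Rightarrow> nat \<Rightarrow> nat pmf) \<Rightarrow> nat pmf \<Rightarrow> bool" where
  "is_env S A T I \<longleftrightarrow> finite S \<and> S \<noteq> {} \<and> finite A \<and> A \<noteq> {} \<and>
     set_pmf I \<subseteq> S \<and> (\<forall>s\<in>S. \<forall>a\<in>A. set_pmf (T s a) \<subseteq> S)"

definition policies :: "nat set \<Rightarrow> nat set \<Rightarrow> (nat \<Rightarrow> nat pmf) set" where
  "policies S A = {\<pi>. (\<forall>s\<in>S. set_pmf (\<pi> s) \<subseteq> A) \<and> (\<forall>s. s \<notin> S \<longrightarrow> \<pi> s = return_pmf undefined)}"

(* A trajectory (s0,a0,s1,a1,...) is the stream of pairs (s_t,a_t). *)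
fun pathprob :: "(nat \<Rightarrow> nat \<Rightarrow> nat pmf) \<Rightarrow> (nat \<Rightarrow> nat pmf) \<Rightarrow> nat pmf \<Rightarrow> (nat \<times> nat) list \<Rightarrow> real" where
  "pathprob T \<pi> D [] = 1"
| "pathprob T \<pi> D ((s, a) # xs) = pmf D s * pmf (\<pi> s) a * pathprob T \<pi> (T s a) xs"

(* The trajectory distribution under \<pi>: the probability measure on trajectories
   whose cylinder sets have the probabilities given by s0 ~ I, a_t ~ \<pi>(s_t),
   s_{t+1} ~ T(s_t,a_t). *)
definition traj :: "(nat \<Rightarrow> nat \<Rightarrow> nat pmf) \<Rightarrow> nat pmf \<Rightarrow> (nat \<Rightarrow> nat pmf) \<Rightarrow> (nat \<times> nat) stream measure" where
  "traj T I \<pi> = (THE M. prob_space M \<and> sets M = sets (stream_space (count_space UNIV)) \<and>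
      (\<forall>xs. measure M (sstart UNIV xs) = pathprob T \<pi> I xs))"

datatype ltl = Atom "nat \<times> nat \<times> nat" | Neg ltl | Or ltl ltl | And ltl ltl | Imp ltl ltl
  | Next ltl | Always ltl | Eventually ltl | Until ltl ltl

fun atoms :: "ltl \<Rightarrow> (nat \<times> nat \<times> nat) set" where
  "atoms (Atom p) = {p}"
| "atoms (Neg \<phi>) = atoms \<phi>"
| "atoms (Or \<phi> \<psi>) = atoms \<phi> \<union> atoms \<psi>"
| "atoms (And \<phi> \<psi>) = atoms \<phi> \<union> atoms \<psi>"
| "atoms (Imp \<phi> \<psi>) = atoms \<phi> \<union> atoms \<psi>"
| "atoms (Next \<phi>) = atoms \<phi>"
| "atoms (Always \<phi>) = atoms \<phi>"
| "atoms (Eventually \<phi>) = atoms \<phi>"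
| "atoms (Until \<phi> \<psi>) = atoms \<phi> \<union> atoms \<psi>"

fun sat :: "ltl \<Rightarrow> (nat \<times> nat) stream \<Rightarrow> nat \<Rightarrow> bool" where
  "sat (Atom (s, a, s')) \<xi> t \<longleftrightarrow> \<xi> !! t = (s, a) \<and> fst (\<xi> !! Suc t) = s'"
| "sat (Neg \<phi>) \<xi> t \<longleftrightarrow> \<not> sat \<phi> \<xi> t"
| "sat (Or \<phi> \<psi>) \<xi> t \<longleftrightarrow> sat \<phi> \<xi> t \<or> sat \<psi> \<xi> t"
| "sat (And \<phi> \<psi>) \<xi> t \<longleftrightarrow> sat \<phi> \<xi> t \<and> sat \<psi> \<xi> t"
| "sat (Imp \<phi> \<psi>) \<xi> t \<longleftrightarrow> (sat \<phi> \<xi> t \<longrightarrow> sat \<psi> \<xi> t)"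
| "sat (Next \<phi>) \<xi> t \<longleftrightarrow> sat \<phi> \<xi> (Suc t)"
| "sat (Always \<phi>) \<xi> t \<longleftrightarrow> (\<forall>t'\<ge>t. sat \<phi> \<xi> t')"
| "sat (Eventually \<phi>) \<xi> t \<longleftrightarrow> (\<exists>t'\<ge>t. sat \<phi> \<xi> t')"
| "sat (Until \<phi> \<psi>) \<xi> t \<longleftrightarrow> (\<exists>t'\<ge>t. sat \<psi> \<xi> t' \<and> (\<forall>t''. t \<le> t'' \<and> t'' < t' \<longrightarrow> sat \<phi> \<xi> t''))"

definition induced_ord :: "('p \<Rightarrow> real) \<Rightarrow> 'p set \<Rightarrow> ('p \<times> 'p) set" where
  "induced_ord J P = {(p1, p2). p1 \<in> P \<and> p2 \<in> P \<and> J p1 \<ge> J p2}"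

definition J_LTL :: "(nat \<Rightarrow> nat \<Rightarrow> nat pmf) \<Rightarrow> nat pmf \<Rightarrow> ltl \<Rightarrow> (nat \<Rightarrow> nat pmf) \<Rightarrow> real" where
  "J_LTL T I \<phi> \<pi> = measure (traj T I \<pi>) {\<xi>. sat \<phi> \<xi> 0}"

definition J_ONMR :: "(nat \<Rightarrow> nat \<Rightarrow> nat pmf) \<Rightarrow> nat pmf \<Rightarrow> (nat \<Rightarrow> nat \<Rightarrow> nat \<Rightarrow> real) \<Rightarrow> (real \<Rightarrow> real) \<Rightarrow> real
    \<Rightarrow> (nat \<Rightarrow> nat pmf) \<Rightarrow> real" where
  "J_ONMR T I R f \<gamma> \<pi> = f (integral\<^sup>L (traj T I \<pi>)
      (\<lambda>\<xi>. \<Sum>t. \<gamma> ^ t * R (fst (\<xi> !! t)) (snd (\<xi> !! t)) (fst (\<xi> !! Suc t))))"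

definition Ord_LTL :: "nat set \<Rightarrow> nat set \<Rightarrow> (nat \<Rightarrow> nat \<Rightarrow> nat pmf) \<Rightarrow> nat pmf \<Rightarrow> ((nat \<Rightarrow> nat pmf) \<times> (nat \<Rightarrow> nat pmf)) set set" where
  "Ord_LTL S A T I = {induced_ord (J_LTL T I \<phi>) (policies S A) | \<phi>. atoms \<phi> \<subseteq> S \<times> A \<times> S}"

definition Ord_ONMR :: "nat set \<Rightarrow> nat set \<Rightarrow> (nat \<Rightarrow> nat \<Rightarrow> nat pmf) \<Rightarrow> nat pmf \<Rightarrow> ((nat \<Rightarrow> nat pmf) \<times> (nat \<Rightarrow> nat pmf)) set set" where
  "Ord_ONMR S A T I = {induced_ord (J_ONMR T I R f \<gamma>) (policies S A) | R f \<gamma>. 0 \<le> \<gamma> \<and> \<gamma> < 1}"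

end

theory Submission
  imports Defs
begin


definition TT :: "nat \<Rightarrow> nat \<Rightarrow> nat pmf" where "TT s a = return_pmf 0"
definition qq :: "nat pmf \<Rightarrow> (nat \<times> nat) pmf" where "qq p = map_pmf (\<lambda>a. (0, a)) p"

lemma pmf_qq: "pmf (qq p) (s, a) = (if s = 0 then pmf p a else 0)"
  unfolding qq_def pmf_map
  by (cases "s = 0") (auto simp: pmf_def[symmetric] vimage_def measure_pmf_single[symmetric])

lemma pathprob_eq: "pathprob TT \<pi> (return_pmf 0) xs = prod_list (map (pmf (qq (\<pi> 0))) xs)"
proof (induction xs)
  case Nil then show ?case by simp
next
  case (Cons x xs)
  obtain s a where x: "x = (s, a)" by force
  show ?case using Cons by (simp add: x pmf_qq TT_def indicator_def)
qed

lemma sets_ss: "sets (stream_space (measure_pmf q)) = sets (stream_space (count_space UNIV))"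
  by (rule sets_stream_space_cong) simp

lemma prod_pmf_nonneg: "0 \<le> prod_list (map (pmf q) xs)"
  by (induction xs) auto

lemma emeasure_sstart_pmf:
  "emeasure (stream_space (measure_pmf q)) (sstart UNIV xs) = ennreal (prod_list (map (pmf q) xs))"
proof (induction xs)
  case Nil
  then show ?case
    using prob_space.emeasure_space_1[OF prob_space.prob_space_stream_space[OF prob_space_measure_pmf, of q]]
    by (simp add: space_stream_space)
next
  case (Cons x xs)
  have meas: "sstart UNIV (x # xs) \<in> sets (stream_space (measure_pmf q))"
    using sets_ss sets_sstart by blast
  have eq: "\<And>t. {y \<in> space (stream_space (measure_pmf q)). t ## y \<in> sstart UNIV (x # xs)}
      = (if t = x then sstart UNIV xs else {})"
    using sstart_in_streams[of xs UNIV] by (auto simp: space_stream_space)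
  have "emeasure (stream_space (measure_pmf q)) (sstart UNIV (x # xs))
     = (\<integral>\<^sup>+t. indicator {x} t * ennreal (prod_list (map (pmf q) xs)) \<partial>measure_pmf q)"
    apply (subst prob_space.emeasure_stream_space[OF prob_space_measure_pmf meas])
    apply (rule nn_integral_cong)
    apply (simp only: eq)
    using Cons sstart_in_streams[of xs UNIV] by (auto simp: space_stream_space Int_absorb1 split: split_indicator)
  also have "\<dots> = ennreal (pmf q x) * ennreal (prod_list (map (pmf q) xs))"
    by (simp add: nn_integral_multc emeasure_pmf_single)
  also have "\<dots> = ennreal (prod_list (map (pmf q) (x # xs)))"
    by (simp add: ennreal_mult prod_pmf_nonneg)
  finally show ?case .
qed

lemma traj_eq: "traj TT (return_pmf 0) \<pi> = stream_space (measure_pmf (qq (\<pi> 0)))"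
proof -
  let ?P = "\<lambda>M. prob_space M \<and> sets M = sets (stream_space (count_space UNIV)) \<and>
      (\<forall>xs. measure M (sstart UNIV xs) = pathprob TT \<pi> (return_pmf 0) xs)"
  let ?N = "stream_space (measure_pmf (qq (\<pi> 0)))"
  have PN: "?P ?N"
  proof (intro conjI allI)
    show "prob_space ?N" by (rule prob_space.prob_space_stream_space[OF prob_space_measure_pmf])
    show "sets ?N = sets (stream_space (count_space UNIV))" by (rule sets_ss)
    fix xs
    show "measure ?N (sstart UNIV xs) = pathprob TT \<pi> (return_pmf 0) xs"
      unfolding pathprob_eq measure_def emeasure_sstart_pmf
      by (simp add: prod_pmf_nonneg)
  qed
  have uniq: "M = ?N" if "?P M" for M
  proof (rule stream_space_eq_sstart[where S = UNIV])
    show "countable (UNIV :: (nat \<times> nat) set)" by simp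
    show "prob_space M" using that by blast
    show "prob_space ?N" using PN by blast
    show "AE x in M. x \<in> streams UNIV" by simp
    show "AE x in ?N. x \<in> streams UNIV" by simp
    show "sets M = sets (stream_space (count_space UNIV))" using that by blast
    show "sets ?N = sets (stream_space (count_space UNIV))" by (rule sets_ss)
    fix xs :: "(nat \<times> nat) list"
    interpret M: prob_space M using that by blast
    interpret N: prob_space ?N using PN by blast
    have mM: "sstart UNIV xs \<in> sets M" using that sets_sstart by blast
    have mN: "sstart UNIV xs \<in> sets ?N" using sets_ss sets_sstart by blast
    show "emeasure M (sstart UNIV xs) = emeasure ?N (sstart UNIV xs)"
      using that PN M.emeasure_eq_measure N.emeasure_eq_measure by metis
  qed
  show ?thesis unfolding traj_def
    by (rule the1_equality) (use PN uniq in blast)+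
qed


lemma distr_snth:
  assumes "prob_space M"
  shows "distr (stream_space M) M (\<lambda>\<xi>. \<xi> !! t) = M"
proof -
  have "distr (stream_space M) M (\<lambda>\<xi>. \<xi> !! t) =
        distr (distr (Pi\<^sub>M UNIV (\<lambda>_. M)) (stream_space M) to_stream) M (\<lambda>\<xi>. \<xi> !! t)"
    by (rule arg_cong[where f="\<lambda>N. distr N M (\<lambda>\<xi>. \<xi> !! t)"]) (rule stream_space_eq_distr)
  also have "\<dots> = distr (Pi\<^sub>M UNIV (\<lambda>_. M)) M ((\<lambda>\<xi>. \<xi> !! t) \<circ> to_stream)"
    by (rule distr_distr) measurable
  also have "(\<lambda>\<xi>. \<xi> !! t) \<circ> to_stream = (\<lambda>X. X t)"
    by (auto simp: to_stream_def)
  also have "distr (Pi\<^sub>M UNIV (\<lambda>_. M)) M (\<lambda>X. X t) = M"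
    by (rule distr_PiM_component) (auto simp: assms)
  finally show ?thesis .
qed

lemma integral_snth:
  fixes h :: "nat \<times> nat \<Rightarrow> real"
  shows "integral\<^sup>L (stream_space (measure_pmf q)) (\<lambda>\<xi>. h (\<xi> !! t)) = integral\<^sup>L (measure_pmf q) h"
proof -
  have "integral\<^sup>L (measure_pmf q) h = integral\<^sup>L (distr (stream_space (measure_pmf q)) (measure_pmf q) (\<lambda>\<xi>. \<xi> !! t)) h"
    by (simp add: distr_snth prob_space_measure_pmf)
  also have "\<dots> = integral\<^sup>L (stream_space (measure_pmf q)) (\<lambda>\<xi>. h (\<xi> !! t))"
    by (rule integral_distr) auto
  finally show ?thesis by simp
qed

lemma integrable_snth:
  fixes h :: "nat \<times> nat \<Rightarrow> real"
  assumes "finite (set_pmf q)"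
  shows "integrable (stream_space (measure_pmf q)) (\<lambda>\<xi>. h (\<xi> !! t))"
proof -
  have "integrable (distr (stream_space (measure_pmf q)) (measure_pmf q) (\<lambda>\<xi>. \<xi> !! t)) h"
    by (simp add: distr_snth prob_space_measure_pmf integrable_measure_pmf_finite assms)
  then show ?thesis by (subst (asm) integrable_distr_eq) auto
qed

lemma AE_snth:
  "AE \<xi> in stream_space (measure_pmf q). \<forall>t. \<xi> !! t \<in> set_pmf q"
proof -
  have "AE \<xi> in stream_space (measure_pmf q). \<xi> !! t \<in> set_pmf q" for t
  proof (rule AE_distrD[where M'="measure_pmf q"])
    show "(\<lambda>\<xi>. \<xi> !! t) \<in> measurable (stream_space (measure_pmf q)) (measure_pmf q)" by simp
    show "AE x in distr (stream_space (measure_pmf q)) (measure_pmf q) (\<lambda>\<xi>. \<xi> !! t). x \<in> set_pmf q"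
      unfolding distr_snth[OF prob_space_measure_pmf] by (rule AE_measure_pmf)
  qed
  then show ?thesis by (simp add: AE_all_countable)
qed


lemma set_qq: "set_pmf (qq p) = (\<lambda>a. (0, a)) ` set_pmf p"
  by (simp add: qq_def)

lemma V_formula:
  fixes R :: "nat \<Rightarrow> nat \<Rightarrow> nat \<Rightarrow> real"
  assumes fin: "finite (set_pmf p)" and g: "0 \<le> \<gamma>" "\<gamma> < 1"
  shows "integral\<^sup>L (stream_space (measure_pmf (qq p)))
      (\<lambda>\<xi>. \<Sum>t. \<gamma> ^ t * R (fst (\<xi> !! t)) (snd (\<xi> !! t)) (fst (\<xi> !! Suc t)))
     = integral\<^sup>L (measure_pmf p) (\<lambda>a. R 0 a 0) / (1 - \<gamma>)"
proof -
  let ?M = "stream_space (measure_pmf (qq p))"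
  define h where "h x = R 0 (snd x) 0" for x :: "nat \<times> nat"
  define B where "B = (\<Sum>y\<in>set_pmf (qq p). \<bar>h y\<bar>)"
  have finq: "finite (set_pmf (qq p))" using fin by (simp add: set_qq)
  have AE1: "AE \<xi> in ?M. (\<Sum>t. \<gamma> ^ t * R (fst (\<xi> !! t)) (snd (\<xi> !! t)) (fst (\<xi> !! Suc t)))
      = (\<Sum>t. \<gamma> ^ t * h (\<xi> !! t))"
    using AE_snth[of "qq p"]
  proof eventually_elim
    case (elim \<xi>)
    have "fst (\<xi> !! t) = 0" for t
    proof -
      from elim have "\<xi> !! t \<in> (\<lambda>a. (0, a)) ` set_pmf p" by (simp add: set_qq)
      then show ?thesis by auto
    qed
    then have "fst (\<xi> !! Suc t) = 0" "fst (\<xi> !! t) = 0" for t by blast+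
    then show ?case by (simp only: h_def)
  qed
  have intf: "integrable ?M (\<lambda>\<xi>. \<gamma> ^ i * h (\<xi> !! i))" for i
    using integrable_snth[OF finq, of "\<lambda>x. \<gamma> ^ i * h x" i] by simp
  have summ: "AE \<xi> in ?M. summable (\<lambda>i. norm (\<gamma> ^ i * h (\<xi> !! i)))"
    using AE_snth[of "qq p"]
  proof eventually_elim
    case (elim \<xi>)
    have "norm (\<gamma> ^ i * h (\<xi> !! i)) \<le> \<gamma> ^ i * B" for i
    proof -
      have "\<bar>h (\<xi> !! i)\<bar> \<le> B" unfolding B_def
        by (rule member_le_sum) (use elim finq in auto)
      then show ?thesis using g by (simp add: abs_mult mult_left_mono)
    qed
    moreover have "summable (\<lambda>i. \<gamma> ^ i * B)"
      using g by (intro summable_mult2 summable_geometric) simp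
    ultimately show ?case
      using summable_comparison_test'[where g="\<lambda>i. \<gamma> ^ i * B" and N=0 and f="\<lambda>i. norm (\<gamma> ^ i * h (\<xi> !! i))"]
      by simp
  qed
  have normint: "integral\<^sup>L ?M (\<lambda>\<xi>. norm (\<gamma> ^ i * h (\<xi> !! i))) = \<gamma> ^ i * integral\<^sup>L (measure_pmf (qq p)) (\<lambda>x. \<bar>h x\<bar>)" for i
    using integral_snth[where h="\<lambda>x. norm (\<gamma> ^ i * h x)" and q="qq p" and t=i] g by (simp add: abs_mult)
  have sums: "summable (\<lambda>i. integral\<^sup>L ?M (\<lambda>\<xi>. norm (\<gamma> ^ i * h (\<xi> !! i))))"
    unfolding normint using g by (intro summable_mult2 summable_geometric) simp
  have "integral\<^sup>L ?M (\<lambda>\<xi>. \<Sum>t. \<gamma> ^ t * R (fst (\<xi> !! t)) (snd (\<xi> !! t)) (fst (\<xi> !! Suc t)))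
      = integral\<^sup>L ?M (\<lambda>\<xi>. \<Sum>t. \<gamma> ^ t * h (\<xi> !! t))"
    by (rule integral_cong_AE) (use AE1 in auto)
  also have "\<dots> = (\<Sum>i. integral\<^sup>L ?M (\<lambda>\<xi>. \<gamma> ^ i * h (\<xi> !! i)))"
    by (rule integral_suminf[OF intf summ sums])
  also have "\<dots> = (\<Sum>i. \<gamma> ^ i * integral\<^sup>L (measure_pmf (qq p)) h)"
    using integral_snth[where h=h and q="qq p"] by simp
  also have "\<dots> = integral\<^sup>L (measure_pmf (qq p)) h / (1 - \<gamma>)"
    using g by (simp add: suminf_mult2[symmetric] suminf_geometric summable_geometric divide_simps)
  also have "integral\<^sup>L (measure_pmf (qq p)) h = integral\<^sup>L (measure_pmf p) (\<lambda>a. R 0 a 0)"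
    by (simp add: qq_def h_def)
  finally show ?thesis .
qed


definition phi :: ltl where "phi = And (Atom (0,1,0)) (Next (Atom (0,2,0)))"

lemma J_LTL_formula:
  "J_LTL TT (return_pmf 0) phi \<pi> = pmf (\<pi> 0) 1 * pmf (\<pi> 0) 2"
proof -
  let ?p = "\<pi> 0"
  let ?M = "stream_space (measure_pmf (qq ?p))"
  have sat_eq: "{\<xi>. sat phi \<xi> 0} = {\<xi> \<in> space ?M. \<xi> !! 0 = (0,1) \<and> fst (\<xi> !! 1) = 0 \<and> \<xi> !! 1 = (0,2) \<and> fst (\<xi> !! 2) = 0}"
    by (auto simp: phi_def space_stream_space numeral_2_eq_2)
  have m1: "{\<xi>. sat phi \<xi> 0} \<in> sets ?M" unfolding sat_eq by measurable
  have m2: "sstart UNIV [(0,1),(0,2)] \<in> sets ?M" using sets_ss sets_sstart by blast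
  have "measure ?M {\<xi>. sat phi \<xi> 0} = measure ?M (sstart UNIV [(0,1),(0,2)])"
  proof (rule measure_eq_AE[OF _ m1 m2])
    show "AE x in ?M. (x \<in> {\<xi>. sat phi \<xi> 0}) = (x \<in> sstart UNIV [(0, 1), (0, 2)])"
      using AE_snth[of "qq ?p"]
    proof eventually_elim
      case (elim \<xi>)
      have F: "fst (\<xi> !! t) = 0" for t
      proof -
        from elim have "\<xi> !! t \<in> (\<lambda>a. (0, a)) ` set_pmf ?p" by (simp add: set_qq)
        then show ?thesis by auto
      qed
      show ?case using F[of "Suc 0"] F[of "Suc (Suc 0)"]
        by (simp add: phi_def sstart_eq less_Suc_eq numeral_2_eq_2)
    qed
  qed
  also have "\<dots> = pmf (qq ?p) (0,1) * pmf (qq ?p) (0,2)"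
    unfolding measure_def emeasure_sstart_pmf by simp
  finally show ?thesis unfolding J_LTL_def traj_eq by (simp add: pmf_qq)
qed


definition pol :: "nat pmf \<Rightarrow> nat \<Rightarrow> nat pmf" where
  "pol p = (\<lambda>s. if s = 0 then p else return_pmf undefined)"

lemma pol0: "pol p 0 = p" by (simp add: pol_def)

lemma pol_in: "set_pmf p \<subseteq> {0,1,2} \<Longrightarrow> pol p \<in> policies {0} {0,1,2}"
  by (auto simp: policies_def pol_def)

lemma J_ONMR_pol:
  assumes "set_pmf p \<subseteq> {0,1,2}" "0 \<le> \<gamma>" "\<gamma> < 1"
  shows "J_ONMR TT (return_pmf 0) R f \<gamma> (pol p) = f (integral\<^sup>L (measure_pmf p) (\<lambda>a. R 0 a 0) / (1 - \<gamma>))"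
proof -
  have "finite (set_pmf p)" using assms(1) finite_subset by blast
  then show ?thesis unfolding J_ONMR_def traj_eq
    using V_formula[of p \<gamma> R] assms by (simp add: pol_def)
qed

lemma frac01:
  fixes x y :: real
  assumes "(0 \<le> x \<and> x \<le> y) \<or> (y \<le> x \<and> x \<le> 0)" "y \<noteq> 0"
  shows "0 \<le> x / y \<and> x / y \<le> 1"
  using assms by (auto simp: divide_simps)
lemma mid_point:
  fixes a b c :: real
  shows "\<exists>s k. 0 \<le> s \<and> s \<le> 1 \<and> (k = (1::nat) \<and> s * a + (1 - s) * c = (a + b) / 2 \<or>
                                    k = 2 \<and> s * b + (1 - s) * c = (a + b) / 2)"
proof -
  let ?m = "(a + b) / 2"
  show ?thesis
  proof (cases "min c a \<le> ?m \<and> ?m \<le> max c a")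
    case True
    show ?thesis
    proof (cases "a = c")
      case True
      with \<open>min c a \<le> ?m \<and> ?m \<le> max c a\<close> have "?m = c" by auto
      then show ?thesis by (intro exI[of _ 0] exI[of _ 1]) auto
    next
      case False
      define s where "s = (?m - c) / (a - c)"
      have e: "s * (a - c) = ?m - c" using False by (simp add: s_def)
      have "s * a + (1 - s) * c = c + s * (a - c)" by (simp add: algebra_simps)
      then have "s * a + (1 - s) * c = ?m" using e by simp
      moreover have "0 \<le> s \<and> s \<le> 1" unfolding s_def
        by (rule frac01) (use True False in \<open>auto simp: min_def max_def split: if_splits\<close>)
      ultimately show ?thesis by (intro exI[of _ s] exI[of _ 1]) auto
    qed
  next
    case False
    then have ne: "b \<noteq> c" and bet: "min c b \<le> ?m \<and> ?m \<le> max c b" by (auto simp: min_def max_def split: if_splits)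
    define s where "s = (?m - c) / (b - c)"
    have e: "s * (b - c) = ?m - c" using ne by (simp add: s_def)
    have "s * b + (1 - s) * c = c + s * (b - c)" by (simp add: algebra_simps)
    then have "s * b + (1 - s) * c = ?m" using e by simp
    moreover have "0 \<le> s \<and> s \<le> 1" unfolding s_def
      by (rule frac01) (use bet ne in \<open>auto simp: min_def max_def split: if_splits\<close>)
    ultimately show ?thesis by (intro exI[of _ s] exI[of _ 2]) auto
  qed
qed

lemma induced_preorder: "preorder_on P (induced_ord J P)"
  unfolding preorder_on_def refl_on_def trans_def induced_ord_def by auto

lemma induced_total: "total_on P (induced_ord J P)"
  unfolding total_on_def induced_ord_def by auto

theorem mainTheorem13:
  shows "\<exists>S A T I. is_env S A T I \<and>
           (\<exists>ord. preorder_on (policies S A) ord \<and> total_on (policies S A) ord \<and>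
                  ord \<in> Ord_LTL S A T I \<and> ord \<notin> Ord_ONMR S A T I)"
proof (intro exI conjI)
  let ?S = "{0::nat}" and ?A = "{0::nat,1,2}" and ?I = "return_pmf (0::nat)"
  let ?ord = "induced_ord (J_LTL TT ?I phi) (policies ?S ?A)"
  show "is_env ?S ?A TT ?I" by (simp add: is_env_def TT_def)
  show "preorder_on (policies ?S ?A) ?ord"
    by (rule induced_preorder)
  show "total_on (policies ?S ?A) ?ord"
    by (rule induced_total)
  show "?ord \<in> Ord_LTL ?S ?A TT ?I"
    unfolding Ord_LTL_def by (intro CollectI exI[of _ phi]) (auto simp: phi_def)
  show "?ord \<notin> Ord_ONMR ?S ?A TT ?I"
  proof
    assume "?ord \<in> Ord_ONMR ?S ?A TT ?I"
    then have "\<exists>R f \<gamma>. ?ord = induced_ord (J_ONMR TT ?I R f \<gamma>) (policies ?S ?A) \<and> 0 \<le> \<gamma> \<and> \<gamma> < (1::real)"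
      unfolding Ord_ONMR_def by (simp only: mem_Collect_eq)
    then obtain R f \<gamma> where g: "0 \<le> \<gamma>" "\<gamma> < (1::real)"
      and eq: "?ord = induced_ord (J_ONMR TT ?I R f \<gamma>) (policies ?S ?A)"
      by (elim exE conjE)
    define X where "X = map_pmf (\<lambda>b. if b then 1 else (2::nat)) (bernoulli_pmf (1/2))"
    obtain s k where s: "0 \<le> s" "s \<le> 1" and
      sk: "k = (1::nat) \<and> s * R 0 1 0 + (1 - s) * R 0 0 0 = (R 0 1 0 + R 0 2 0) / 2 \<or>
           k = 2 \<and> s * R 0 2 0 + (1 - s) * R 0 0 0 = (R 0 1 0 + R 0 2 0) / 2"
      using mid_point[where a="R 0 1 0" and b="R 0 2 0" and c="R 0 0 0"] by blast
    define Y where "Y = map_pmf (\<lambda>b. if b then k else (0::nat)) (bernoulli_pmf s)"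
    have k12: "k = 1 \<or> k = 2" using sk by (elim disjE conjE) simp_all
    have setX: "set_pmf X \<subseteq> {0,1,2}" by (auto simp: X_def)
    have setY: "set_pmf Y \<subseteq> {0,1,2}" using k12 by (auto simp: Y_def)
    have EX: "integral\<^sup>L (measure_pmf X) (\<lambda>a. R 0 a 0) = (R 0 1 0 + R 0 2 0) / 2"
      by (simp add: X_def)
    have EY: "integral\<^sup>L (measure_pmf Y) (\<lambda>a. R 0 a 0) = (R 0 1 0 + R 0 2 0) / 2"
      using k12
    proof
      assume "k = 1" then show ?thesis using sk s by (simp add: Y_def algebra_simps)
    next
      assume "k = 2" then show ?thesis using sk s by (simp add: Y_def algebra_simps)
    qed
    have pX1: "pmf X 1 = 1/2"
    proof -
      have "(\<lambda>b. if b then 1 else (2::nat)) -` {1} = {True}" by (auto split: if_splits)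
      then show ?thesis unfolding X_def pmf_map by (simp add: measure_pmf_single)
    qed
    have pX2: "pmf X 2 = 1/2"
    proof -
      have "(\<lambda>b. if b then 1 else (2::nat)) -` {2} = {False}" by (auto split: if_splits)
      then show ?thesis unfolding X_def pmf_map by (simp add: measure_pmf_single)
    qed
    have pY: "pmf Y 1 * pmf Y 2 = 0"
    proof -
      have "1 \<notin> set_pmf Y \<or> 2 \<notin> set_pmf Y" using k12 by (auto simp: Y_def)
      then show ?thesis by (auto simp: set_pmf_eq)
    qed
    have in1: "(pol Y, pol X) \<in> induced_ord (J_ONMR TT ?I R f \<gamma>) (policies ?S ?A)"
      using pol_in[OF setX] pol_in[OF setY]
      by (simp add: induced_ord_def J_ONMR_pol[OF setX g] J_ONMR_pol[OF setY g] EX EY)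
    have "(pol Y, pol X) \<notin> ?ord"
    proof -
      have "J_LTL TT ?I phi (pol Y) = 0" using pY by (simp only: J_LTL_formula pol0)
      moreover have "J_LTL TT ?I phi (pol X) = 1/4" using pX1 pX2 by (simp only: J_LTL_formula pol0)
      ultimately show ?thesis by (simp add: induced_ord_def)
    qed
    moreover from in1 have "(pol Y, pol X) \<in> ?ord" by (simp only: eq)
    ultimately show False by blast
  qed
qed
end
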